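(* Let $\Omega,\epsilon\in\mathbb{R}$ and $T\ge 0$. On a qubit $\mathbb{C}^2$ with basis $\{|0\rangle,|1\rangle\}$, let $\Phi_T^\epsilon$ be the quantum channel mapping $\rho(0)\mapsto\rho(T)$, where $\rho(t)$ solves $$\dot\rho=-i\frac{\Omega+\epsilon}{2}[\sigma_z,\rho]+\Big(\sigma_-\rho\sigma_+-\tfrac12\{\sigma_+\sigma_-,\rho\}\Big)+\Big(\sigma_+\rho\sigma_--\tfrac12\{\sigma_-\sigma_+,\rho\}\Big),$$ with $\sigma_+=|1\rangle\langle 0|$, $\sigma_-=\sigma_+^\dagger$, $\sigma_z$ the Pauli $z$ matrix. Then for every qubit density operator $\rho$, $$G_{\mathrm{ch}}(\Phi_T^0,\Phi_T^\epsilon;\rho)=1-2e^{-2T}\big(1-\cos(\epsilon T)\big)\rho_{00}\rho_{11},$$ where $\rho_{kk}=\langle k|\rho|k\rangle$.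
   Context: Superfidelity: $G(\rho_1,\rho_2)=\operatorname{Tr}(\rho_1\rho_2)+\sqrt{1-\operatorname{Tr}\rho_1^2}\sqrt{1-\operatorname{Tr}\rho_2^2}$. Channel superfidelity of channels $\Phi,\Psi$ on $\mathcal{L}(\mathcal{X})$ at $\sigma\in\mathcal{D}(\mathcal{X})$: $G_{\mathrm{ch}}(\Phi,\Psi;\sigma)=\inf G\big((\Phi\otimes\mathbb{1}_{\mathcal{L}(\mathcal{Z})})(\xi),(\Psi\otimes\mathbb{1}_{\mathcal{L}(\mathcal{Z})})(\xi)\big)$ over all finite-dimensional $\mathcal{Z}$ and all pure states $\xi$ on $\mathcal{X}\otimes\mathcal{Z}$ with $\operatorname{Tr}_{\mathcal{Z}}\xi=\sigma$. $\{A,B\}=AB+BA$. *)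

theory Defs
  imports "HOL-Analysis.Analysis"
begin

text \<open>Qubit operators: complex 2x2 matrices indexed by the numeral type 2,
  basis |0> = index 0, |1> = index 1. Entry M $ i $ j = <i|M|j>.\<close>

type_synonym qop = "complex^2^2"

definition mmul :: "qop \<Rightarrow> qop \<Rightarrow> qop" where
  "mmul A B = (\<chi> i j. \<Sum>k\<in>UNIV. A $ i $ k * B $ k $ j)"

definition madd :: "qop \<Rightarrow> qop \<Rightarrow> qop" where
  "madd A B = (\<chi> i j. A $ i $ j + B $ i $ j)"

definition msub :: "qop \<Rightarrow> qop \<Rightarrow> qop" where
  "msub A B = (\<chi> i j. A $ i $ j - B $ i $ j)"

definition mscale :: "complex \<Rightarrow> qop \<Rightarrow> qop" where
  "mscale c A = (\<chi> i j. c * A $ i $ j)"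

definition madj :: "qop \<Rightarrow> qop" where
  "madj A = (\<chi> i j. cnj (A $ j $ i))"

definition commutator :: "qop \<Rightarrow> qop \<Rightarrow> qop" where
  "commutator A B = msub (mmul A B) (mmul B A)"

definition anticommutator :: "qop \<Rightarrow> qop \<Rightarrow> qop" where
  "anticommutator A B = madd (mmul A B) (mmul B A)"

definition sigma_plus :: qop where
  "sigma_plus = (\<chi> i j. if i = 1 \<and> j = 0 then 1 else 0)"

definition sigma_minus :: qop where
  "sigma_minus = madj sigma_plus"

definition sigma_z :: qop where
  "sigma_z = (\<chi> i j. if i = j then (if i = 0 then 1 else -1) else 0)"

definition dissipator :: "qop \<Rightarrow> qop \<Rightarrow> qop" where
  "dissipator L \<rho> = msub (mmul (mmul L \<rho>) (madj L))
                          (mscale (1/2) (anticommutator (mmul (madj L) L) \<rho>))"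

definition lindbladian :: "real \<Rightarrow> real \<Rightarrow> qop \<Rightarrow> qop" where
  "lindbladian \<Omega> \<epsilon> \<rho> =
     madd (mscale (- \<i> * complex_of_real ((\<Omega> + \<epsilon>) / 2)) (commutator sigma_z \<rho>))
          (madd (dissipator sigma_minus \<rho>) (dissipator sigma_plus \<rho>))"

definition channel :: "real \<Rightarrow> real \<Rightarrow> real \<Rightarrow> qop \<Rightarrow> qop" where
  "channel \<Omega> \<epsilon> T \<rho>0 = (THE M. \<exists>\<rho> :: real \<Rightarrow> qop. \<rho> 0 = \<rho>0 \<and>
      (\<forall>t\<in>{0..T}. (\<rho> has_vector_derivative lindbladian \<Omega> \<epsilon> (\<rho> t)) (at t within {0..T})) \<and>
      \<rho> T = M)"

definition qubit_density :: "qop \<Rightarrow> bool" where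
  "qubit_density \<rho> \<longleftrightarrow>
     (\<forall>i j. \<rho> $ i $ j = cnj (\<rho> $ j $ i)) \<and>
     (\<forall>v :: complex^2. 0 \<le> Re (\<Sum>i\<in>UNIV. \<Sum>j\<in>UNIV. cnj (v $ i) * \<rho> $ i $ j * v $ j)) \<and>
     (\<Sum>i\<in>UNIV. \<rho> $ i $ i) = 1"

text \<open>Operators on X \<otimes> Z with dim Z = n: functions on index pairs (a,k),
  a :: 2, k < n (only indices with k < n are relevant).\<close>
type_synonym bop = "2 \<times> nat \<Rightarrow> 2 \<times> nat \<Rightarrow> complex"

definition idx :: "nat \<Rightarrow> (2 \<times> nat) set" where
  "idx n = UNIV \<times> {..<n}"

definition btrace_prod :: "nat \<Rightarrow> bop \<Rightarrow> bop \<Rightarrow> complex" where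
  "btrace_prod n A B = (\<Sum>p\<in>idx n. \<Sum>q\<in>idx n. A p q * B q p)"

text \<open>Superfidelity G(r1,r2) = Tr(r1 r2) + sqrt(1 - Tr r1^2) sqrt(1 - Tr r2^2)
  (traces are real for Hermitian operators; we take real parts).\<close>
definition superfid :: "nat \<Rightarrow> bop \<Rightarrow> bop \<Rightarrow> real" where
  "superfid n A B = Re (btrace_prod n A B)
      + sqrt (1 - Re (btrace_prod n A A)) * sqrt (1 - Re (btrace_prod n B B))"

definition unit_vec :: "nat \<Rightarrow> (2 \<times> nat \<Rightarrow> complex) \<Rightarrow> bool" where
  "unit_vec n \<psi> \<longleftrightarrow> (\<Sum>p\<in>idx n. (cmod (\<psi> p))\<^sup>2) = 1"

definition proj :: "(2 \<times> nat \<Rightarrow> complex) \<Rightarrow> bop" where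
  "proj \<psi> = (\<lambda>p q. \<psi> p * cnj (\<psi> q))"

definition ptrace_Z :: "nat \<Rightarrow> bop \<Rightarrow> qop" where
  "ptrace_Z n X = (\<chi> a b. \<Sum>k<n. X (a, k) (b, k))"

definition unitm :: "2 \<Rightarrow> 2 \<Rightarrow> qop" where
  "unitm c d = (\<chi> i j. if i = c \<and> j = d then 1 else 0)"

text \<open>(Phi \<otimes> id_Z)(X), using X = sum_{c,d} |c><d| \<otimes> X_cd.\<close>
definition tensor_id :: "(qop \<Rightarrow> qop) \<Rightarrow> bop \<Rightarrow> bop" where
  "tensor_id \<Phi> X = (\<lambda>(a, k) (b, l). \<Sum>c\<in>UNIV. \<Sum>d\<in>UNIV. \<Phi> (unitm c d) $ a $ b * X (c, k) (d, l))"

definition channel_superfid :: "(qop \<Rightarrow> qop) \<Rightarrow> (qop \<Rightarrow> qop) \<Rightarrow> qop \<Rightarrow> real" where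
  "channel_superfid \<Phi> \<Psi> \<sigma> = Inf {superfid n (tensor_id \<Phi> (proj \<psi>)) (tensor_id \<Psi> (proj \<psi>)) | n \<psi>.
       unit_vec n \<psi> \<and> ptrace_Z n (proj \<psi>) = \<sigma>}"

end

theory Submission
  imports Defs
begin

lemma two2: "(2::2) = 0" by simp
lemma sum2: "sum f (UNIV::2 set) = f 0 + f 1" using sum_2[of f] two2 by (simp add: add.commute)
lemma all2: "(\<forall>i::2. P i) \<longleftrightarrow> P 0 \<and> P 1" using forall_2[of P] two2 by auto
definition Lm :: "real \<Rightarrow> real \<Rightarrow> qop \<Rightarrow> qop" where
 "Lm \<Omega> \<epsilon> X = (\<chi> i j. if i=0\<and>j=0 then X$1$1 - X$0$0 else if i=1\<and>j=1 then X$0$0 - X$1$1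
    else if i=0\<and>j=1 then (-1 - \<i>*complex_of_real(\<Omega>+\<epsilon>)) * X$0$1 else (-1 + \<i>*complex_of_real(\<Omega>+\<epsilon>))*X$1$0)"
lemma lind_eq: "lindbladian \<Omega> \<epsilon> X = Lm \<Omega> \<epsilon> X"
  unfolding vec_eq_iff all2 Lm_def lindbladian_def madd_def msub_def mscale_def mmul_def
    commutator_def anticommutator_def dissipator_def sigma_minus_def sigma_plus_def madj_def sigma_z_def
  by (simp add: sum2 field_simps)

lemma exp_vd: "((\<lambda>t. exp (k * complex_of_real t)) has_vector_derivative (k * exp (k * complex_of_real t))) (at t within s)"
  by (rule has_vector_derivative_real_field) (auto intro!: derivative_eq_intros)

lemma vec_vd:
  fixes f :: "real \<Rightarrow> 'a::real_normed_vector ^ 'n"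
  assumes "\<And>i. ((\<lambda>t. f t $ i) has_vector_derivative D $ i) (at x within s)"
  shows "(f has_vector_derivative D) (at x within s)"
proof -
  have "((\<lambda>y. (1 / norm(y - x)) *\<^sub>R ((\<lambda>t. f t $ i) y - ((\<lambda>t. f t $ i) x + (y - x) *\<^sub>R D $ i))) \<longlongrightarrow> 0) (at x within s)" for i
    using assms[of i] unfolding has_vector_derivative_def has_derivative_within by blast
  then have "((\<lambda>y. \<chi> i. (1 / norm(y - x)) *\<^sub>R (f y $ i - (f x $ i + (y - x) *\<^sub>R D $ i))) \<longlongrightarrow> (\<chi> i. 0)) (at x within s)"
    by (intro tendsto_vec_lambda) simp
  moreover have "(\<lambda>y. \<chi> i. (1 / norm(y - x)) *\<^sub>R (f y $ i - (f x $ i + (y - x) *\<^sub>R D $ i))) = (\<lambda>y. (1 / norm(y - x)) *\<^sub>R (f y - (f x + (y - x) *\<^sub>R D)))"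
    by (auto simp: vec_eq_iff)
  ultimately show ?thesis
    unfolding has_vector_derivative_def has_derivative_within
    by (auto intro: bounded_linear_scaleR_left simp: zero_vec_def)
qed

lemma nth_vd:
  fixes f :: "real \<Rightarrow> 'a::real_normed_vector ^ 'n"
  assumes "(f has_vector_derivative D) F"
  shows "((\<lambda>t. f t $ i) has_vector_derivative D $ i) F"
  using bounded_linear.has_vector_derivative[OF bounded_linear_vec_nth assms] .

lemma nth2_vd:
  fixes f :: "real \<Rightarrow> 'a::real_normed_vector ^ 'n ^ 'm"
  assumes "(f has_vector_derivative D) F"
  shows "((\<lambda>t. f t $ i $ j) has_vector_derivative D $ i $ j) F"
  using nth_vd[OF nth_vd[OF assms, of i], of j] .

lemma vec2_vd:
  fixes f :: "real \<Rightarrow> 'a::real_normed_vector ^ 'n ^ 'm"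
  assumes "\<And>i j. ((\<lambda>t. f t $ i $ j) has_vector_derivative D $ i $ j) (at x within s)"
  shows "(f has_vector_derivative D) (at x within s)"
  by (intro vec_vd assms)

definition Em :: "real \<Rightarrow> real \<Rightarrow> real \<Rightarrow> qop \<Rightarrow> qop" where
 "Em \<Omega> \<epsilon> t X = (\<chi> i j. if i=0\<and>j=0 then (X$0$0 + X$1$1 + (X$0$0 - X$1$1)*exp(-2*complex_of_real t))/2
   else if i=1\<and>j=1 then (X$0$0 + X$1$1 - (X$0$0 - X$1$1)*exp(-2*complex_of_real t))/2
   else if i=0\<and>j=1 then X$0$1 * exp((-1 - \<i>*complex_of_real(\<Omega>+\<epsilon>)) * complex_of_real t)
   else X$1$0 * exp((-1 + \<i>*complex_of_real(\<Omega>+\<epsilon>)) * complex_of_real t))"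

lemma G_vd: "((\<lambda>t. a + b * exp (k * complex_of_real t)) has_vector_derivative k * b * exp (k * complex_of_real t)) (at t within s)"
  using has_vector_derivative_add[OF has_vector_derivative_const has_vector_derivative_mult_right[OF exp_vd[of k t s]], of a b]
  by (simp add: ac_simps)

lemma Em_vd: "((\<lambda>t. Em \<Omega> \<epsilon> t X) has_vector_derivative lindbladian \<Omega> \<epsilon> (Em \<Omega> \<epsilon> t X)) (at t within s)"
  unfolding lind_eq
proof (rule vec2_vd)
  fix i j :: 2
  have ij: "(i = 0 \<or> i = 1) \<and> (j = 0 \<or> j = 1)" using all2[of "\<lambda>i. i = 0 \<or> i = 1"] by auto
  let ?k1 = "-1 - \<i>*complex_of_real(\<Omega>+\<epsilon>)" and ?k2 = "-1 + \<i>*complex_of_real(\<Omega>+\<epsilon>)"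
  have e00: "(\<lambda>t. Em \<Omega> \<epsilon> t X $ 0 $ 0) = (\<lambda>t. (X$0$0 + X$1$1)/2 + ((X$0$0 - X$1$1)/2) * exp (-2 * complex_of_real t))"
    by (auto simp: Em_def field_simps)
  have e11: "(\<lambda>t. Em \<Omega> \<epsilon> t X $ 1 $ 1) = (\<lambda>t. (X$0$0 + X$1$1)/2 + (-(X$0$0 - X$1$1)/2) * exp (-2 * complex_of_real t))"
    by (auto simp: Em_def field_simps)
  have e01: "(\<lambda>t. Em \<Omega> \<epsilon> t X $ 0 $ 1) = (\<lambda>t. 0 + X$0$1 * exp (?k1 * complex_of_real t))"
    by (auto simp: Em_def field_simps)
  have e10: "(\<lambda>t. Em \<Omega> \<epsilon> t X $ 1 $ 0) = (\<lambda>t. 0 + X$1$0 * exp (?k2 * complex_of_real t))"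
    by (auto simp: Em_def field_simps)
  show "((\<lambda>t. Em \<Omega> \<epsilon> t X $ i $ j) has_vector_derivative Lm \<Omega> \<epsilon> (Em \<Omega> \<epsilon> t X) $ i $ j) (at t within s)"
    using ij
    apply (elim conjE disjE)
    apply (simp_all only: e00 e11 e01 e10)
    apply (rule has_vector_derivative_eq_rhs[OF G_vd], simp add: Em_def Lm_def field_simps)+
    done
qed

lemma uniq_scalar:
  fixes z :: "real \<Rightarrow> complex"
  assumes T: "T \<ge> 0" and d: "\<And>t. t \<in> {0..T} \<Longrightarrow> (z has_vector_derivative k * z t) (at t within {0..T})"
  shows "z T = z 0 * exp (k * complex_of_real T)"
proof -
  define w where "w t = z t * exp (- k * complex_of_real t)" for t
  have "(w has_vector_derivative 0) (at t within {0..T})" if "t \<in> {0..T}" for t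
  proof -
    have "(w has_vector_derivative (z t * (- k * exp (- k * complex_of_real t)) + k * z t * exp (- k * complex_of_real t))) (at t within {0..T})"
      unfolding w_def by (rule has_vector_derivative_mult[OF d[OF that] exp_vd])
    then show ?thesis by (simp add: algebra_simps)
  qed
  then obtain c where c: "\<And>x. x \<in> {0..T} \<Longrightarrow> w x = c"
    using has_vector_derivative_zero_constant[of "{0..T}" w] by blast
  have "w T = w 0" using c T by auto
  then have "z T * exp (- k * complex_of_real T) = z 0" by (simp add: w_def)
  then have "z T * exp (- k * complex_of_real T) * exp (k * complex_of_real T) = z 0 * exp (k * complex_of_real T)" by simp
  then show ?thesis by (simp add: mult.assoc exp_add[symmetric])
qed

lemma sol_T:
  assumes T: "T \<ge> 0" and r0: "\<rho> 0 = X"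
    and d: "\<forall>t\<in>{0..T}. (\<rho> has_vector_derivative lindbladian \<Omega> \<epsilon> (\<rho> t)) (at t within {0..T})"
  shows "\<rho> T = Em \<Omega> \<epsilon> T X"
proof -
  have dc: "((\<lambda>t. \<rho> t $ i $ j) has_vector_derivative Lm \<Omega> \<epsilon> (\<rho> t) $ i $ j) (at t within {0..T})"
    if "t \<in> {0..T}" for i j t
    using nth2_vd[OF d[rule_format, OF that]] unfolding lind_eq .
  have s: "(\<lambda>t. \<rho> t $ 0 $ 0 + \<rho> t $ 1 $ 1) T = (\<lambda>t. \<rho> t $ 0 $ 0 + \<rho> t $ 1 $ 1) 0 * exp (0 * complex_of_real T)"
  proof (rule uniq_scalar[OF T])
    fix t assume "t \<in> {0..T}"
    from has_vector_derivative_add[OF dc[OF this, of 0 0] dc[OF this, of 1 1]]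
    show "((\<lambda>t. \<rho> t $ 0 $ 0 + \<rho> t $ 1 $ 1) has_vector_derivative 0 * (\<rho> t $ 0 $ 0 + \<rho> t $ 1 $ 1)) (at t within {0..T})"
      by (simp add: Lm_def)
  qed
  have r: "(\<lambda>t. \<rho> t $ 0 $ 0 - \<rho> t $ 1 $ 1) T = (\<lambda>t. \<rho> t $ 0 $ 0 - \<rho> t $ 1 $ 1) 0 * exp (-2 * complex_of_real T)"
  proof (rule uniq_scalar[OF T])
    fix t assume "t \<in> {0..T}"
    from has_vector_derivative_diff[OF dc[OF this, of 0 0] dc[OF this, of 1 1]]
    show "((\<lambda>t. \<rho> t $ 0 $ 0 - \<rho> t $ 1 $ 1) has_vector_derivative -2 * (\<rho> t $ 0 $ 0 - \<rho> t $ 1 $ 1)) (at t within {0..T})"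
      by (simp add: Lm_def algebra_simps)
  qed
  have b: "(\<lambda>t. \<rho> t $ 0 $ 1) T = (\<lambda>t. \<rho> t $ 0 $ 1) 0 * exp ((-1 - \<i>*complex_of_real(\<Omega>+\<epsilon>)) * complex_of_real T)"
  proof (rule uniq_scalar[OF T])
    fix t assume "t \<in> {0..T}"
    from dc[OF this, of 0 1]
    show "((\<lambda>t. \<rho> t $ 0 $ 1) has_vector_derivative (-1 - \<i>*complex_of_real(\<Omega>+\<epsilon>)) * \<rho> t $ 0 $ 1) (at t within {0..T})"
      by (simp add: Lm_def)
  qed
  have c: "(\<lambda>t. \<rho> t $ 1 $ 0) T = (\<lambda>t. \<rho> t $ 1 $ 0) 0 * exp ((-1 + \<i>*complex_of_real(\<Omega>+\<epsilon>)) * complex_of_real T)"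
  proof (rule uniq_scalar[OF T])
    fix t assume "t \<in> {0..T}"
    from dc[OF this, of 1 0]
    show "((\<lambda>t. \<rho> t $ 1 $ 0) has_vector_derivative (-1 + \<i>*complex_of_real(\<Omega>+\<epsilon>)) * \<rho> t $ 1 $ 0) (at t within {0..T})"
      by (simp add: Lm_def)
  qed
  let ?E = "exp (-2 * complex_of_real T)"
  have s': "\<rho> T $ 0 $ 0 + \<rho> T $ 1 $ 1 = X $ 0 $ 0 + X $ 1 $ 1" using s r0 by simp
  have r': "\<rho> T $ 0 $ 0 - \<rho> T $ 1 $ 1 = (X $ 0 $ 0 - X $ 1 $ 1) * ?E" using r r0 by simp
  have "2 * \<rho> T $ 0 $ 0 = (\<rho> T $ 0 $ 0 + \<rho> T $ 1 $ 1) + (\<rho> T $ 0 $ 0 - \<rho> T $ 1 $ 1)" by simp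
  also have "\<dots> = (X $ 0 $ 0 + X $ 1 $ 1) + (X $ 0 $ 0 - X $ 1 $ 1) * ?E" by (simp only: s' r')
  finally have a: "\<rho> T $ 0 $ 0 = ((X $ 0 $ 0 + X $ 1 $ 1) + (X $ 0 $ 0 - X $ 1 $ 1) * ?E) / 2" by (simp add: mult.commute)
  have "2 * \<rho> T $ 1 $ 1 = (\<rho> T $ 0 $ 0 + \<rho> T $ 1 $ 1) - (\<rho> T $ 0 $ 0 - \<rho> T $ 1 $ 1)" by simp
  also have "\<dots> = (X $ 0 $ 0 + X $ 1 $ 1) - (X $ 0 $ 0 - X $ 1 $ 1) * ?E" by (simp only: s' r')
  finally have d: "\<rho> T $ 1 $ 1 = ((X $ 0 $ 0 + X $ 1 $ 1) - (X $ 0 $ 0 - X $ 1 $ 1) * ?E) / 2" by (simp add: mult.commute)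
  from a d b c r0 show ?thesis
    unfolding vec_eq_iff all2 Em_def by simp
qed

lemma channel_eq:
  assumes "T \<ge> 0"
  shows "channel \<Omega> \<epsilon> T X = Em \<Omega> \<epsilon> T X"
  unfolding channel_def
proof (rule the_equality)
  show "\<exists>\<rho>. \<rho> 0 = X \<and> (\<forall>t\<in>{0..T}. (\<rho> has_vector_derivative lindbladian \<Omega> \<epsilon> (\<rho> t)) (at t within {0..T})) \<and> \<rho> T = Em \<Omega> \<epsilon> T X"
    by (rule exI[of _ "\<lambda>t. Em \<Omega> \<epsilon> t X"]) (intro conjI ballI Em_vd; simp add: vec_eq_iff all2 Em_def)
  show "\<And>M. \<exists>\<rho>. \<rho> 0 = X \<and> (\<forall>t\<in>{0..T}. (\<rho> has_vector_derivative lindbladian \<Omega> \<epsilon> (\<rho> t)) (at t within {0..T})) \<and> \<rho> T = M \<Longrightarrow> M = Em \<Omega> \<epsilon> T X"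
    using sol_T[OF assms] by blast
qed

lemma perm_sum:
  fixes F :: "2\<Rightarrow>nat\<Rightarrow>2\<Rightarrow>nat\<Rightarrow>2\<Rightarrow>2\<Rightarrow>2\<Rightarrow>2\<Rightarrow>complex"
  shows "(\<Sum>a\<in>UNIV. \<Sum>k<n. \<Sum>b\<in>UNIV. \<Sum>l<n. \<Sum>c\<in>UNIV. \<Sum>d\<in>UNIV. \<Sum>c'\<in>UNIV. \<Sum>d'\<in>UNIV. F a k b l c d c' d')
       = (\<Sum>a\<in>UNIV. \<Sum>b\<in>UNIV. \<Sum>c\<in>UNIV. \<Sum>d\<in>UNIV. \<Sum>c'\<in>UNIV. \<Sum>d'\<in>UNIV. \<Sum>k<n. \<Sum>l<n. F a k b l c d c' d')"
  by (simp add: sum.swap[where A="{..<n}" and B="UNIV::2 set"])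


lemma btr_gen:
  "btrace_prod n (tensor_id \<Phi>1 (proj \<psi>)) (tensor_id \<Phi>2 (proj \<psi>)) =
   (\<Sum>a\<in>UNIV. \<Sum>b\<in>UNIV. \<Sum>c\<in>UNIV. \<Sum>d\<in>UNIV. \<Sum>c'\<in>UNIV. \<Sum>d'\<in>UNIV.
      \<Phi>1 (unitm c d) $ a $ b * \<Phi>2 (unitm c' d') $ b $ a * ptrace_Z n (proj \<psi>) $ c $ d' * ptrace_Z n (proj \<psi>) $ c' $ d)"
proof -
  define F where "F a k b l c d c' d' = \<Phi>1 (unitm c d) $ a $ b * \<Phi>2 (unitm c' d') $ b $ a *
      (\<psi> (c,k) * cnj (\<psi> (d',k))) * (\<psi> (c',l) * cnj (\<psi> (d,l)))" for a k b l c d c' d'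
  have "btrace_prod n (tensor_id \<Phi>1 (proj \<psi>)) (tensor_id \<Phi>2 (proj \<psi>)) =
     (\<Sum>a\<in>UNIV. \<Sum>k<n. \<Sum>b\<in>UNIV. \<Sum>l<n. \<Sum>c\<in>UNIV. \<Sum>d\<in>UNIV. \<Sum>c'\<in>UNIV. \<Sum>d'\<in>UNIV. F a k b l c d c' d')"
    unfolding btrace_prod_def idx_def sum.cartesian_product' tensor_id_def proj_def split
    apply (simp only: sum_distrib_right)
    apply (simp add: F_def sum_distrib_left mult_ac)
    done
  also have "\<dots> = (\<Sum>a\<in>UNIV. \<Sum>b\<in>UNIV. \<Sum>c\<in>UNIV. \<Sum>d\<in>UNIV. \<Sum>c'\<in>UNIV. \<Sum>d'\<in>UNIV. \<Sum>k<n. \<Sum>l<n. F a k b l c d c' d')"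
    by (rule perm_sum)
  also have "\<dots> = (\<Sum>a\<in>UNIV. \<Sum>b\<in>UNIV. \<Sum>c\<in>UNIV. \<Sum>d\<in>UNIV. \<Sum>c'\<in>UNIV. \<Sum>d'\<in>UNIV.
      \<Phi>1 (unitm c d) $ a $ b * \<Phi>2 (unitm c' d') $ b $ a * ptrace_Z n (proj \<psi>) $ c $ d' * ptrace_Z n (proj \<psi>) $ c' $ d)"
    by (simp add: F_def ptrace_Z_def proj_def sum_distrib_left sum_distrib_right sum_product mult_ac)
  finally show ?thesis .
qed

lemma Em_unit:
  "Em \<Omega> \<epsilon> T (unitm c d) $ a $ b =
    (if c = d then (if a = b then (1 + (if a = c then 1 else -1) * exp (-2 * complex_of_real T)) / 2 else 0)
     else if a = c \<and> b = d then (if c = 0 then exp ((-1 - \<i>*complex_of_real(\<Omega>+\<epsilon>)) * complex_of_real T)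
                                else exp ((-1 + \<i>*complex_of_real(\<Omega>+\<epsilon>)) * complex_of_real T))
     else 0)"
proof -
  have "\<And>x::2. x = 0 \<or> x = 1" using all2[of "\<lambda>x. x = 0 \<or> x = 1"] by simp
  then show ?thesis
    by (cases "a = 0"; cases "b = 0"; cases "c = 0"; cases "d = 0"; simp add: Em_def unitm_def; metis)
qed

lemma tr_formula:
  assumes "T \<ge> 0"
  shows "btrace_prod n (tensor_id (channel \<Omega> e1 T) (proj \<psi>)) (tensor_id (channel \<Omega> e2 T) (proj \<psi>)) =
    ((1 + exp (-2 * complex_of_real T)^2)/2) * ((ptrace_Z n (proj \<psi>) $ 0 $ 0)^2 + (ptrace_Z n (proj \<psi>) $ 1 $ 1)^2)
    + (1 - exp (-2 * complex_of_real T)^2) * ptrace_Z n (proj \<psi>) $ 0 $ 1 * ptrace_Z n (proj \<psi>) $ 1 $ 0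
    + (exp ((-1 - \<i>*complex_of_real(\<Omega>+e1)) * complex_of_real T) * exp ((-1 + \<i>*complex_of_real(\<Omega>+e2)) * complex_of_real T)
     + exp ((-1 + \<i>*complex_of_real(\<Omega>+e1)) * complex_of_real T) * exp ((-1 - \<i>*complex_of_real(\<Omega>+e2)) * complex_of_real T))
      * ptrace_Z n (proj \<psi>) $ 0 $ 0 * ptrace_Z n (proj \<psi>) $ 1 $ 1"
  unfolding btr_gen channel_eq[OF assms] Em_unit
  apply (simp add: sum2)
  apply (simp add: field_simps power2_eq_square)
  done


lemma density_facts:
  assumes "qubit_density \<rho>"
  obtains a d x y where "\<rho> $ 0 $ 0 = complex_of_real a" "\<rho> $ 1 $ 1 = complex_of_real d"
    "\<rho> $ 0 $ 1 = Complex x y" "\<rho> $ 1 $ 0 = Complex x (-y)" "a + d = 1" "a \<ge> 0" "d \<ge> 0"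
    "x^2 + y^2 \<le> a * d"
proof -
  have herm: "\<And>i j. \<rho> $ i $ j = cnj (\<rho> $ j $ i)" and psd: "\<And>v :: complex^2. 0 \<le> Re (\<Sum>i\<in>UNIV. \<Sum>j\<in>UNIV. cnj (v $ i) * \<rho> $ i $ j * v $ j)"
    and tr: "(\<Sum>i\<in>UNIV. \<rho> $ i $ i) = 1"
    using assms unfolding qubit_density_def by blast+
  define a where "a = Re (\<rho> $ 0 $ 0)"
  define d where "d = Re (\<rho> $ 1 $ 1)"
  define x where "x = Re (\<rho> $ 0 $ 1)"
  define y where "y = Im (\<rho> $ 0 $ 1)"
  have ea: "\<rho> $ 0 $ 0 = complex_of_real a" using herm[of 0 0] unfolding a_def by (simp add: complex_eq_iff)
  have ed: "\<rho> $ 1 $ 1 = complex_of_real d" using herm[of 1 1] unfolding d_def by (simp add: complex_eq_iff)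
  have eb: "\<rho> $ 0 $ 1 = Complex x y" unfolding x_def y_def by simp
  have ec: "\<rho> $ 1 $ 0 = Complex x (-y)" using herm[of 1 0] unfolding x_def y_def by (simp add: complex_eq_iff)
  have ad: "a + d = 1" using tr ea ed by (simp add: sum2 complex_eq_iff)
  let ?v = "\<lambda>p q. (\<chi> i. if i = 0 then p else q) :: complex^2"
  have Q0: "(\<Sum>i\<in>UNIV. \<Sum>j\<in>UNIV. cnj (?v p q $ i) * \<rho> $ i $ j * ?v p q $ j) =
     cnj p * \<rho> $ 0 $ 0 * p + cnj p * \<rho> $ 0 $ 1 * q + cnj q * \<rho> $ 1 $ 0 * p + cnj q * \<rho> $ 1 $ 1 * q" for p q
    by (simp add: sum2)
  have Q: "Re (\<Sum>i\<in>UNIV. \<Sum>j\<in>UNIV. cnj (?v p q $ i) * \<rho> $ i $ j * ?v p q $ j) =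
     a * (Re p * Re p + Im p * Im p) + d * (Re q * Re q + Im q * Im q)
     + 2 * (x * (Re p * Re q + Im p * Im q) - y * (Re p * Im q - Im p * Re q))" for p q
    unfolding Q0 ea ed eb ec by (simp add: algebra_simps)
  have a0: "a \<ge> 0" using psd[of "?v 1 0"] unfolding Q by simp
  have d0: "d \<ge> 0" using psd[of "?v 0 1"] unfolding Q by simp
  have "0 \<le> a * (a * d - (x^2 + y^2))" using psd[of "?v (Complex x y) (- complex_of_real a)"] unfolding Q
    by (simp add: algebra_simps power2_eq_square)
  moreover have "0 \<le> d * (a * d - (x^2 + y^2))" using psd[of "?v (complex_of_real d) (- Complex x (-y))"] unfolding Q
    by (simp add: algebra_simps power2_eq_square)
  ultimately have "0 \<le> (a + d) * (a * d - (x^2 + y^2))" by (simp add: distrib_right)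
  then have "x^2 + y^2 \<le> a * d" using ad by simp
  then show ?thesis using that ea ed eb ec ad a0 d0 by blast
qed

lemma ee: "exp ((-1 - \<i>*complex_of_real \<alpha>) * complex_of_real T) * exp ((-1 + \<i>*complex_of_real \<beta>) * complex_of_real T)
   = complex_of_real (exp (-2*T)) * cis ((\<beta> - \<alpha>) * T)"
proof -
  have "(-1 - \<i>*complex_of_real \<alpha>) * complex_of_real T + (-1 + \<i>*complex_of_real \<beta>) * complex_of_real T
     = complex_of_real (-2*T) + \<i> * complex_of_real ((\<beta> - \<alpha>) * T)"
    by (simp add: algebra_simps)
  then have "exp ((-1 - \<i>*complex_of_real \<alpha>) * complex_of_real T) * exp ((-1 + \<i>*complex_of_real \<beta>) * complex_of_real T)
     = exp (complex_of_real (-2*T) + \<i> * complex_of_real ((\<beta> - \<alpha>) * T))"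
    by (simp only: exp_add[symmetric])
  also have "\<dots> = complex_of_real (exp (-2*T)) * cis ((\<beta> - \<alpha>) * T)"
    by (simp only: exp_add exp_of_real cis_conv_exp)
  finally show ?thesis .
qed

lemma ee2: "exp ((-1 + \<i>*complex_of_real \<alpha>) * complex_of_real T) * exp ((-1 - \<i>*complex_of_real \<beta>) * complex_of_real T)
   = complex_of_real (exp (-2*T)) * cis ((\<alpha> - \<beta>) * T)"
  using ee[of \<beta> T \<alpha>] by (simp add: mult.commute)

lemma re_tr:
  assumes T: "T \<ge> 0" and P: "ptrace_Z n (proj \<psi>) = \<rho>"
    and ea: "\<rho> $ 0 $ 0 = complex_of_real a" and ed: "\<rho> $ 1 $ 1 = complex_of_real d"
    and eb: "\<rho> $ 0 $ 1 = Complex x y" and ec: "\<rho> $ 1 $ 0 = Complex x (-y)"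
  shows "Re (btrace_prod n (tensor_id (channel \<Omega> e1 T) (proj \<psi>)) (tensor_id (channel \<Omega> e2 T) (proj \<psi>)))
    = (1 + exp (-2*T)^2)/2 * (a^2 + d^2) + (1 - exp (-2*T)^2) * (x^2 + y^2) + 2 * exp (-2*T) * cos ((e2 - e1) * T) * a * d"
proof -
  have q: "exp (-2 * complex_of_real T) = complex_of_real (exp (-2*T))" by (simp add: exp_of_real[symmetric])
  have c: "cos ((\<Omega> + e1 - (\<Omega> + e2)) * T) = cos ((e2 - e1) * T)"
    by (metis cos_minus minus_diff_eq mult_minus_left add_diff_cancel_left)
  have c2: "cos (T*e1 - T*e2) = cos (T*e2 - T*e1)" by (metis cos_minus minus_diff_eq)
  show ?thesis
    unfolding tr_formula[OF T] P ea ed eb ec q ee ee2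
    by (simp add: c c2 power2_eq_square algebra_simps)
qed

lemma V_le1:
  fixes a d x y q :: real
  assumes "a + d = 1" "a \<ge> 0" "d \<ge> 0" "x^2 + y^2 \<le> a * d" "0 \<le> q" "q \<le> 1"
  shows "(1 + q^2)/2 * (a^2 + d^2) + (1 - q^2) * (x^2 + y^2) + 2 * q * a * d \<le> 1"
proof -
  have q2: "0 \<le> 1 - q^2" using assms(5,6) by (simp add: power_le_one)
  have h1: "(1 - q^2) * (x^2 + y^2) \<le> (1 - q^2) * (a * d)" using mult_left_mono[OF assms(4) q2] .
  have d: "d = 1 - a" using assms(1) by simp
  have h3: "a * d \<le> 1/4" unfolding d using sum_squares_ge_zero[of "a - 1/2" 0]
    by (simp add: power2_eq_square algebra_simps)
  have h4: "0 \<le> q * (1 - q)" using assms(5,6) by simp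
  have h5: "q * (1 - q) * (a * d) \<le> q * (1 - q) * (1/4)" using mult_left_mono[OF h3 h4] .
  have e: "(1 + q^2)/2 * (a^2 + d^2) + (1 - q^2) * (a * d) + 2 * q * a * d = (1 + q^2)/2 + 2 * (q * (1 - q) * (a * d))"
    unfolding d by (simp add: power2_eq_square field_simps)
  have "(1 + q^2)/2 * (a^2 + d^2) + (1 - q^2) * (x^2 + y^2) + 2 * q * a * d \<le> (1 + q^2)/2 + 2 * (q * (1 - q) * (1/4))"
    using h1 h5 e by linarith
  also have "\<dots> = (1 + q) / 2" by (simp add: power2_eq_square field_simps)
  also have "\<dots> \<le> 1" using assms(6) by simp
  finally show ?thesis .
qed

lemma purif:
  assumes ea: "\<rho> $ 0 $ 0 = complex_of_real a" and ed: "\<rho> $ 1 $ 1 = complex_of_real d"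
    and eb: "\<rho> $ 0 $ 1 = Complex x y" and ec: "\<rho> $ 1 $ 0 = Complex x (-y)" and ad: "a + d = 1"
    and a0: "a \<ge> 0" and d0: "d \<ge> 0" and xy: "x^2 + y^2 \<le> a * d"
  shows "\<exists>n \<psi>. unit_vec n \<psi> \<and> ptrace_Z n (proj \<psi>) = \<rho>"
proof (cases "a = 0")
  case True
  then have "x^2 + y^2 \<le> 0" using xy by simp
  then have "x^2 + y^2 = 0" by (smt (verit) zero_le_power2)
  then have x: "x = 0" and y: "y = 0" by (simp_all add: sum_power2_eq_zero_iff)
  define \<psi> :: "2 \<times> nat \<Rightarrow> complex" where "\<psi> p = (if p = (1, 0) then 1 else 0)" for p
  have "unit_vec 1 \<psi>" by (simp add: unit_vec_def idx_def sum.cartesian_product' sum2 \<psi>_def)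
  moreover have "ptrace_Z 1 (proj \<psi>) = \<rho>"
    unfolding vec_eq_iff all2 using ea ed eb ec True ad x y
    by (simp add: ptrace_Z_def proj_def \<psi>_def complex_eq_iff)
  ultimately show ?thesis by blast
next
  case False
  then have ap: "a > 0" using a0 by simp
  define s where "s = sqrt (d - (x^2 + y^2) / a)"
  have s2: "s * s = d - (x^2 + y^2) / a"
    unfolding s_def using xy ap by (simp add: field_simps)
  have sa: "sqrt a * sqrt a = a" using a0 by simp
  define \<psi> :: "2 \<times> nat \<Rightarrow> complex" where "\<psi> p = (if p = (0, 0) then complex_of_real (sqrt a)
     else if p = (1, 0) then Complex x (-y) / complex_of_real (sqrt a)
     else if p = (1, 1) then complex_of_real s else 0)" for p
  have n2: "{..<2::nat} = {0, 1}" by auto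
  have "unit_vec 2 \<psi>"
    unfolding unit_vec_def idx_def sum.cartesian_product' sum2 n2
    using ap ad s2 sa
    by (simp add: \<psi>_def norm_divide cmod_def power2_eq_square field_simps)
  moreover have "ptrace_Z 2 (proj \<psi>) = \<rho>"
    unfolding vec_eq_iff all2 using ea ed eb ec ap s2 sa
    by (simp add: ptrace_Z_def proj_def \<psi>_def n2 complex_eq_iff field_simps power2_eq_square)
  ultimately show ?thesis by blast
qed

theorem mainTheorem7:
  fixes \<Omega> \<epsilon> T :: real and \<rho> :: qop
  assumes "T \<ge> 0" and "qubit_density \<rho>"
  shows "channel_superfid (channel \<Omega> 0 T) (channel \<Omega> \<epsilon> T) \<rho>
       = 1 - 2 * exp (-2 * T) * (1 - cos (\<epsilon> * T)) * Re (\<rho> $ 0 $ 0) * Re (\<rho> $ 1 $ 1)"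
proof -
  obtain a d x y where ea: "\<rho> $ 0 $ 0 = complex_of_real a" and ed: "\<rho> $ 1 $ 1 = complex_of_real d"
    and eb: "\<rho> $ 0 $ 1 = Complex x y" and ec: "\<rho> $ 1 $ 0 = Complex x (-y)" and ad: "a + d = 1"
    and a0: "a \<ge> 0" and d0: "d \<ge> 0" and xy: "x^2 + y^2 \<le> a * d"
    using density_facts[OF assms(2)] by blast
  define q where "q = exp (-2*T)"
  have q0: "0 \<le> q" and q1: "q \<le> 1" unfolding q_def using assms(1) by auto
  define V where "V = (1 + q^2)/2 * (a^2 + d^2) + (1 - q^2) * (x^2 + y^2) + 2 * q * a * d"
  have V1: "V \<le> 1" unfolding V_def by (rule V_le1[OF ad a0 d0 xy q0 q1])
  define v where "v = 1 - 2 * exp (-2 * T) * (1 - cos (\<epsilon> * T)) * Re (\<rho> $ 0 $ 0) * Re (\<rho> $ 1 $ 1)"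
  have val: "superfid n (tensor_id (channel \<Omega> 0 T) (proj \<psi>)) (tensor_id (channel \<Omega> \<epsilon> T) (proj \<psi>)) = v"
    if P: "ptrace_Z n (proj \<psi>) = \<rho>" for n \<psi>
  proof -
    let ?Y = "\<lambda>e. tensor_id (channel \<Omega> e T) (proj \<psi>)"
    have r1: "Re (btrace_prod n (?Y 0) (?Y \<epsilon>)) = V - 2 * q * a * d + 2 * q * cos (\<epsilon> * T) * a * d"
      using re_tr[OF assms(1) P ea ed eb ec, of \<Omega> 0 \<epsilon>] unfolding V_def q_def by simp
    have r2: "Re (btrace_prod n (?Y 0) (?Y 0)) = V"
      using re_tr[OF assms(1) P ea ed eb ec, of \<Omega> 0 0] unfolding V_def q_def by simp
    have r3: "Re (btrace_prod n (?Y \<epsilon>) (?Y \<epsilon>)) = V"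
      using re_tr[OF assms(1) P ea ed eb ec, of \<Omega> \<epsilon> \<epsilon>] unfolding V_def q_def by simp
    have "sqrt (1 - V) * sqrt (1 - V) = 1 - V" using V1 by simp
    then show ?thesis
      unfolding superfid_def r1 r2 r3 v_def ea ed q_def by (simp add: algebra_simps)
  qed
  obtain n \<psi> where u: "unit_vec n \<psi>" and P: "ptrace_Z n (proj \<psi>) = \<rho>"
    using purif[OF ea ed eb ec ad a0 d0 xy] by blast
  have S: "{superfid n (tensor_id (channel \<Omega> 0 T) (proj \<psi>)) (tensor_id (channel \<Omega> \<epsilon> T) (proj \<psi>)) | n \<psi>.
       unit_vec n \<psi> \<and> ptrace_Z n (proj \<psi>) = \<rho>} = {v}"
    using val u P by blast
  show ?thesis unfolding channel_superfid_def S v_def by simp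
qed
end
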